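(* Let $X$ be a finite set and let $\bar G$ be the inductive limit of a chain of epimorphisms $G_1\xrightarrow{\alpha_1}G_2\xrightarrow{\alpha_2}\cdots$, where each $G_i=\langle X\mid\mathcal R_i\rangle$ is a finitely presented hyperbolic group and each $\alpha_i$ is induced by the identity map $X\to X$. For $i\in\mathbb N$ let $r_i$ be the radius of $\alpha_i$ and let $\delta_i$ be a hyperbolicity constant of $G_i$ with respect to $X$. If $\bar G$ is lacunary hyperbolic, then either $\bar G$ is finitely presented (hence hyperbolic), or $\limsup_{i\to\infty} r_i=\infty$ and $\limsup_{i\to\infty}\delta_i=\infty$.
   Context: For a homomorphism $\alpha:G\to G'$ with $G=\langle X\rangle$, $|X|<\infty$, the radius of $\alpha$ is the maximal radius of a ball in the Cayley graph $\Gamma(G,X)$ centered at $1_G$ such that every element of that ball other than $1_G$ is mapped to a non-trivial element of $G'$. A hyperbolicity constant of $G_i$ with respect to $X$ is a $\delta>0$ such that all geodesic triangles in $\Gamma(G_i,X)$ are $\delta$-slim (each side lies in the $\delta$-neighborhood of the union of the other two). A finitely generated group $G=\langle X\rangle$ is lacunary hyperbolic if for some unbounded sequence of positive scaling constants $(d_i)$ and some non-principal ultrafilter $\omega$, the asymptotic cone $\mathrm{Con}^\omega(G,(d_i))$ (the $\omega$-ultralimit of the based metric spaces $(\Gamma(G,X), d/d_i, 1)$, $d$ the word metric) is an $\mathbb R$-tree. *)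

theory Defs
  imports Complex_Main "HOL-Library.Extended_Nat" "HOL-Library.Extended_Real"
    "HOL-Library.Liminf_Limsup"
begin

text \<open>Words over the finite generating set X (the finite type 'x) and its inverses:
  (x, True) stands for x, (x, False) for x^-1.\<close>
type_synonym 'x word = "('x \<times> bool) list"

inductive pres_eq :: "'x word set \<Rightarrow> 'x word \<Rightarrow> 'x word \<Rightarrow> bool" for R where
  pe_refl: "pres_eq R w w"
| pe_sym: "pres_eq R u v \<Longrightarrow> pres_eq R v u"
| pe_trans: "pres_eq R u v \<Longrightarrow> pres_eq R v w \<Longrightarrow> pres_eq R u w"
| pe_cancel: "pres_eq R (u @ [(x, b), (x, \<not> b)] @ v) (u @ v)"
| pe_rel: "r \<in> R \<Longrightarrow> pres_eq R (u @ r @ v) (u @ v)"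

text \<open>A group generated by X is given by the relation E on words
  ("u and v represent the same element").\<close>
definition wdist :: "('x word \<Rightarrow> 'x word \<Rightarrow> bool) \<Rightarrow> 'x word \<Rightarrow> 'x word \<Rightarrow> nat" where
  "wdist E u v = (LEAST n. \<exists>w. length w = n \<and> E (u @ w) v)"

definition geod :: "('x word \<Rightarrow> 'x word \<Rightarrow> bool) \<Rightarrow> 'x word \<Rightarrow> 'x word \<Rightarrow> (nat \<Rightarrow> 'x word) \<Rightarrow> bool" where
  "geod E u v p \<longleftrightarrow> E (p 0) u \<and> E (p (wdist E u v)) v \<and>
     (\<forall>k < wdist E u v. wdist E (p k) (p (Suc k)) \<le> 1)"

definition side_close ::
  "('x word \<Rightarrow> 'x word \<Rightarrow> bool) \<Rightarrow> real \<Rightarrow> 'x word \<Rightarrow> 'x word \<Rightarrow> 'x word \<Rightarrow>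
   (nat \<Rightarrow> 'x word) \<Rightarrow> (nat \<Rightarrow> 'x word) \<Rightarrow> (nat \<Rightarrow> 'x word) \<Rightarrow> bool" where
  "side_close E \<delta> u v w p q s \<longleftrightarrow>
     (\<forall>k \<le> wdist E u v. \<exists>j.
        (j \<le> wdist E v w \<and> real (wdist E (p k) (q j)) \<le> \<delta>) \<or>
        (j \<le> wdist E w u \<and> real (wdist E (p k) (s j)) \<le> \<delta>))"

definition hyp_const :: "('x word \<Rightarrow> 'x word \<Rightarrow> bool) \<Rightarrow> real \<Rightarrow> bool" where
  "hyp_const E \<delta> \<longleftrightarrow> \<delta> > 0 \<and>
     (\<forall>u v w p q s. geod E u v p \<and> geod E v w q \<and> geod E w u s \<longrightarrow>
        side_close E \<delta> u v w p q s \<and> side_close E \<delta> v w u q s p \<and>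
        side_close E \<delta> w u v s p q)"

definition hyperbolic :: "('x word \<Rightarrow> 'x word \<Rightarrow> bool) \<Rightarrow> bool" where
  "hyperbolic E \<longleftrightarrow> (\<exists>\<delta>. hyp_const E \<delta>)"

definition fin_presented :: "('x word \<Rightarrow> 'x word \<Rightarrow> bool) \<Rightarrow> bool" where
  "fin_presented E \<longleftrightarrow> (\<exists>R. finite R \<and> (\<forall>u v. E u v \<longleftrightarrow> pres_eq R u v))"

definition radius :: "('x word \<Rightarrow> 'x word \<Rightarrow> bool) \<Rightarrow> ('x word \<Rightarrow> 'x word \<Rightarrow> bool) \<Rightarrow> enat" where
  "radius E E' = Sup {enat r | r. \<forall>w. wdist E [] w \<le> r \<and> \<not> E w [] \<longrightarrow> \<not> E' w []}"

definition nonprincipal_ultrafilter :: "nat filter \<Rightarrow> bool" where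
  "nonprincipal_ultrafilter \<omega> \<longleftrightarrow> \<omega> \<noteq> bot \<and>
     (\<forall>P. eventually P \<omega> \<or> eventually (\<lambda>n. \<not> P n) \<omega>) \<and>
     (\<forall>m. eventually (\<lambda>n. n \<noteq> m) \<omega>)"

definition cone_pts :: "('x word \<Rightarrow> 'x word \<Rightarrow> bool) \<Rightarrow> nat filter \<Rightarrow> (nat \<Rightarrow> real) \<Rightarrow> (nat \<Rightarrow> 'x word) set" where
  "cone_pts E \<omega> d = {s. \<exists>C. eventually (\<lambda>n. real (wdist E [] (s n)) / d n \<le> C) \<omega>}"

definition cone_pdist :: "('x word \<Rightarrow> 'x word \<Rightarrow> bool) \<Rightarrow> nat filter \<Rightarrow> (nat \<Rightarrow> real) \<Rightarrow>
    (nat \<Rightarrow> 'x word) \<Rightarrow> (nat \<Rightarrow> 'x word) \<Rightarrow> real" where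
  "cone_pdist E \<omega> d s t = Lim \<omega> (\<lambda>n. real (wdist E (s n) (t n)) / d n)"

definition cone :: "('x word \<Rightarrow> 'x word \<Rightarrow> bool) \<Rightarrow> nat filter \<Rightarrow> (nat \<Rightarrow> real) \<Rightarrow> (nat \<Rightarrow> 'x word) set set" where
  "cone E \<omega> d = (\<lambda>s. {t \<in> cone_pts E \<omega> d. cone_pdist E \<omega> d s t = 0}) ` cone_pts E \<omega> d"

definition cone_dist :: "('x word \<Rightarrow> 'x word \<Rightarrow> bool) \<Rightarrow> nat filter \<Rightarrow> (nat \<Rightarrow> real) \<Rightarrow>
    (nat \<Rightarrow> 'x word) set \<Rightarrow> (nat \<Rightarrow> 'x word) set \<Rightarrow> real" where
  "cone_dist E \<omega> d A B = cone_pdist E \<omega> d (SOME s. s \<in> A) (SOME t. t \<in> B)"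

definition geodesic_seg :: "'p set \<Rightarrow> ('p \<Rightarrow> 'p \<Rightarrow> real) \<Rightarrow> 'p \<Rightarrow> 'p \<Rightarrow> (real \<Rightarrow> 'p) \<Rightarrow> bool" where
  "geodesic_seg M dm x y g \<longleftrightarrow> g 0 = x \<and> g (dm x y) = y \<and> g ` {0..dm x y} \<subseteq> M \<and>
     (\<forall>s\<in>{0..dm x y}. \<forall>t\<in>{0..dm x y}. dm (g s) (g t) = \<bar>s - t\<bar>)"

definition arc_in :: "'p set \<Rightarrow> ('p \<Rightarrow> 'p \<Rightarrow> real) \<Rightarrow> 'p \<Rightarrow> 'p \<Rightarrow> (real \<Rightarrow> 'p) \<Rightarrow> bool" where
  "arc_in M dm x y g \<longleftrightarrow> g 0 = x \<and> g 1 = y \<and> g ` {0..1} \<subseteq> M \<and> inj_on g {0..1} \<and>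
     (\<forall>t\<in>{0..1}. \<forall>e>0. \<exists>\<eta>>0. \<forall>t'\<in>{0..1}. \<bar>t' - t\<bar> < \<eta> \<longrightarrow> dm (g t') (g t) < e)"

definition R_tree :: "'p set \<Rightarrow> ('p \<Rightarrow> 'p \<Rightarrow> real) \<Rightarrow> bool" where
  "R_tree M dm \<longleftrightarrow>
     (\<forall>x\<in>M. \<forall>y\<in>M. dm x y \<ge> 0 \<and> dm x y = dm y x \<and> (dm x y = 0 \<longleftrightarrow> x = y) \<and>
        (\<forall>z\<in>M. dm x z \<le> dm x y + dm y z)) \<and>
     (\<forall>x\<in>M. \<forall>y\<in>M. \<exists>g. geodesic_seg M dm x y g \<and>
        (\<forall>h. arc_in M dm x y h \<longrightarrow> h ` {0..1} = g ` {0..dm x y}))"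

definition lacunary_hyperbolic :: "('x word \<Rightarrow> 'x word \<Rightarrow> bool) \<Rightarrow> bool" where
  "lacunary_hyperbolic E \<longleftrightarrow> (\<exists>d \<omega>. (\<forall>n. d n > 0) \<and> \<not> bdd_above (range d) \<and>
     nonprincipal_ultrafilter \<omega> \<and> R_tree (cone E \<omega> d) (cone_dist E \<omega> d))"

end

theory Submission
  imports Defs
begin

definition winv :: "'x word \<Rightarrow> 'x word" where
  "winv w = rev (map (\<lambda>(x,b). (x, \<not> b)) w)"

lemma winv_Nil[simp]: "winv [] = []" by (simp add: winv_def)
lemma winv_Cons[simp]: "winv (a # w) = winv w @ [(fst a, \<not> snd a)]"
  by (cases a) (simp add: winv_def)
lemma winv_app[simp]: "winv (u @ v) = winv v @ winv u" by (simp add: winv_def)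
lemma winv_winv[simp]: "winv (winv w) = w" by (induction w) auto
lemma length_winv[simp]: "length (winv w) = length w" by (simp add: winv_def)

lemma pe_cong: "pres_eq R a b \<Longrightarrow> pres_eq R (u @ a @ v) (u @ b @ v)"
proof (induction arbitrary: u v rule: pres_eq.induct)
  case (pe_refl w) then show ?case by (rule pres_eq.pe_refl)
next
  case (pe_sym a b) then show ?case by (blast intro: pres_eq.pe_sym)
next
  case (pe_trans a b c) then show ?case by (blast intro: pres_eq.pe_trans)
next
  case (pe_cancel u' x b v')
  show ?case using pres_eq.pe_cancel[of R "u @ u'" x b "v' @ v"] by simp
next
  case (pe_rel r u' v')
  show ?case using pres_eq.pe_rel[OF pe_rel(1), of "u @ u'" "v' @ v"] by simp
qed

lemma pe_trans': "pres_eq R a b \<Longrightarrow> pres_eq R b c \<Longrightarrow> pres_eq R a c"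
  by (rule pres_eq.pe_trans)
lemma pe_sym': "pres_eq R a b \<Longrightarrow> pres_eq R b a"
  by (rule pres_eq.pe_sym)

lemma pe_app: "pres_eq R a b \<Longrightarrow> pres_eq R c d \<Longrightarrow> pres_eq R (a @ c) (b @ d)"
proof -
  assume 1: "pres_eq R a b" and 2: "pres_eq R c d"
  have "pres_eq R (a @ c) (b @ c)" using pe_cong[OF 1, of "[]" c] by simp
  moreover have "pres_eq R (b @ c) (b @ d)" using pe_cong[OF 2, of b "[]"] by simp
  ultimately show ?thesis by (rule pe_trans')
qed

lemma pe_appL: "pres_eq R c d \<Longrightarrow> pres_eq R (a @ c) (a @ d)"
  using pe_app[OF pres_eq.pe_refl] by blast
lemma pe_appR: "pres_eq R a b \<Longrightarrow> pres_eq R (a @ c) (b @ c)"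
  using pe_app[OF _ pres_eq.pe_refl] by blast

lemma pe_winv_r: "pres_eq R (w @ winv w) []"
proof (induction w)
  case Nil then show ?case by (simp add: pres_eq.pe_refl)
next
  case (Cons a w)
  obtain x b where a: "a = (x,b)" by force
  have "pres_eq R ([a] @ (w @ winv w) @ [(x, \<not> b)]) ([a] @ [] @ [(x, \<not> b)])"
    by (rule pe_cong[OF Cons.IH])
  moreover have "pres_eq R ([] @ [(x,b),(x,\<not>b)] @ []) ([] @ [])" by (rule pres_eq.pe_cancel)
  ultimately show ?case using a by (auto intro: pe_trans')
qed

lemma pe_winv_l: "pres_eq R (winv w @ w) []"
  using pe_winv_r[of R "winv w"] by simp

lemma pe_cancel_left: "pres_eq R (X @ u) (X @ v) \<Longrightarrow> pres_eq R u v"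
proof -
  assume h: "pres_eq R (X @ u) (X @ v)"
  have 1: "pres_eq R (winv X @ X @ u) (winv X @ X @ v)" using pe_appL[OF h] by simp
  have 2: "pres_eq R (winv X @ X @ u) u" using pe_appR[OF pe_winv_l, of R X u] by simp
  have 3: "pres_eq R (winv X @ X @ v) v" using pe_appR[OF pe_winv_l, of R X v] by simp
  show ?thesis by (meson 1 2 3 pe_trans' pe_sym')
qed

lemma pe_to_triv: "pres_eq R u v \<Longrightarrow> pres_eq R (u @ winv v) []"
  using pe_appR pe_winv_r pe_trans' by blast

lemma pe_from_triv: "pres_eq R (u @ winv v) [] \<Longrightarrow> pres_eq R u v"
proof -
  assume h: "pres_eq R (u @ winv v) []"
  have "pres_eq R (u @ winv v @ v) (u @ [])" by (rule pe_appL[OF pe_winv_l])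
  moreover have "pres_eq R ((u @ winv v) @ v) ([] @ v)" by (rule pe_appR[OF h])
  ultimately show ?thesis by (metis append.assoc append_Nil append_Nil2 pe_trans' pe_sym')
qed

lemma pe_mono_rel:
  assumes "pres_eq S u v" and "\<And>s. s \<in> S \<Longrightarrow> pres_eq R s []"
  shows "pres_eq R u v"
  using assms(1)
proof (induction rule: pres_eq.induct)
  case (pe_refl w) then show ?case by (rule pres_eq.pe_refl)
next
  case (pe_sym a b) then show ?case by (blast intro: pe_sym')
next
  case (pe_trans a b c) then show ?case by (blast intro: pe_trans')
next
  case (pe_cancel u' x b v') then show ?case by (rule pres_eq.pe_cancel)
next
  case (pe_rel r u' v')
  show ?case using pe_cong[OF assms(2)[OF pe_rel], of u' v'] by simp
qed

lemma wdist_ex: "\<exists>w. length w = wdist (pres_eq R) u v \<and> pres_eq R (u @ w) v"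
proof -
  have "pres_eq R (u @ (winv u @ v)) ([] @ v)"
    using pe_appR[OF pe_winv_r, of R u v] by simp
  then have "\<exists>n. \<exists>w. length w = n \<and> pres_eq R (u @ w) v" by auto
  from LeastI_ex[OF this] show ?thesis unfolding wdist_def by blast
qed

lemma wdist_le: "pres_eq R (u @ w) v \<Longrightarrow> wdist (pres_eq R) u v \<le> length w"
  unfolding wdist_def by (rule Least_le) blast

lemma wdist_sym: "wdist (pres_eq R) u v = wdist (pres_eq R) v u"
proof -
  have *: "wdist (pres_eq R) b a \<le> wdist (pres_eq R) a b" for a b
  proof -
    obtain w where w: "length w = wdist (pres_eq R) a b" "pres_eq R (a @ w) b"
      using wdist_ex by blast
    have "pres_eq R (b @ winv w) (a @ w @ winv w)" using pe_appR[OF pe_sym'[OF w(2)]] by simp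
    moreover have "pres_eq R (a @ w @ winv w) (a @ [])" by (rule pe_appL[OF pe_winv_r])
    ultimately have "pres_eq R (b @ winv w) a" using pe_trans' by fastforce
    then show ?thesis using wdist_le w(1) by fastforce
  qed
  show ?thesis using *[of u v] *[of v u] by simp
qed

lemma wdist_tri: "wdist (pres_eq R) u z \<le> wdist (pres_eq R) u v + wdist (pres_eq R) v z"
proof -
  obtain w1 where w1: "length w1 = wdist (pres_eq R) u v" "pres_eq R (u @ w1) v"
    using wdist_ex by blast
  obtain w2 where w2: "length w2 = wdist (pres_eq R) v z" "pres_eq R (v @ w2) z"
    using wdist_ex by blast
  have "pres_eq R (u @ w1 @ w2) z" using pe_trans'[OF pe_appR[OF w1(2)] w2(2)] by simp
  then show ?thesis using wdist_le[of R u "w1 @ w2" z] w1(1) w2(1) by simp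
qed

lemma wdist_zero: "wdist (pres_eq R) u v = 0 \<longleftrightarrow> pres_eq R u v"
proof
  assume "wdist (pres_eq R) u v = 0"
  then show "pres_eq R u v" using wdist_ex[of R u v] by auto
next
  assume "pres_eq R u v"
  then show "wdist (pres_eq R) u v = 0" using wdist_le[of R u "[]" v] by simp
qed

lemma wdist_resp2: "pres_eq R v v' \<Longrightarrow> wdist (pres_eq R) u v = wdist (pres_eq R) u v'"
proof -
  assume h: "pres_eq R v v'"
  have "wdist (pres_eq R) u v \<le> wdist (pres_eq R) u v'"
    using wdist_tri[of R u v v'] wdist_zero[of R v' v] pe_sym'[OF h] by simp
  moreover have "wdist (pres_eq R) u v' \<le> wdist (pres_eq R) u v"
    using wdist_tri[of R u v' v] wdist_zero[of R v v'] h by simp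
  ultimately show ?thesis by simp
qed

lemma wdist_take: "a \<le> b \<Longrightarrow> wdist (pres_eq R) (take a w) (take b w) \<le> b - a"
proof -
  assume ab: "a \<le> b"
  have "take b w = take a w @ take (b - a) (drop a w)"
    using ab by (metis le_add_diff_inverse take_add)
  then have "pres_eq R (take a w @ take (b - a) (drop a w)) (take b w)"
    by (simp add: pres_eq.pe_refl)
  then show ?thesis using wdist_le by fastforce
qed

lemma wdist_take': "a \<le> b \<Longrightarrow> wdist (pres_eq R) (take b w) (take a w) \<le> b - a"
  using wdist_take wdist_sym by metis

definition geo :: "'x word set \<Rightarrow> 'x word \<Rightarrow> 'x word \<Rightarrow> bool" where
  "geo R x a \<longleftrightarrow> pres_eq R a x \<and> length a = wdist (pres_eq R) [] x"

lemma geo_ex: "\<exists>a. geo R x a"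
  using wdist_ex[of R "[]" x] unfolding geo_def by auto

lemma geo_self: "geo R x a \<Longrightarrow> wdist (pres_eq R) [] a = length a"
  unfolding geo_def using wdist_resp2 by metis

lemma geo_prefix:
  assumes g: "geo R x a" and t: "t \<le> length a"
  shows "wdist (pres_eq R) [] (take t a) = t"
proof (rule antisym)
  show "wdist (pres_eq R) [] (take t a) \<le> t"
    using wdist_le[of R "[]" "take t a" "take t a"] t by (simp add: pres_eq.pe_refl)
next
  show "t \<le> wdist (pres_eq R) [] (take t a)"
  proof (rule ccontr)
    assume "\<not> ?thesis"
    obtain w where w: "length w = wdist (pres_eq R) [] (take t a)" "pres_eq R w (take t a)"
      using wdist_ex[of R "[]" "take t a"] by auto
    have "pres_eq R (w @ drop t a) (take t a @ drop t a)" by (rule pe_appR[OF w(2)])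
    then have "pres_eq R ([] @ (w @ drop t a)) x" using g unfolding geo_def
      by (auto intro: pe_trans')
    then have "wdist (pres_eq R) [] x \<le> length w + (length a - t)" using wdist_le by fastforce
    then show False using g \<open>\<not> _\<close> w(1) t unfolding geo_def by linarith
  qed
qed


lemma wt: fixes u v z shows "wdist (pres_eq R) u z \<le> wdist (pres_eq R) u v + wdist (pres_eq R) v z"
  by (rule wdist_tri)

lemma fellow:
  assumes hc: "hyp_const (pres_eq R) \<delta>"
    and ga: "geo R x a" and gb: "geo R y b"
    and ab: "wdist (pres_eq R) a b \<le> 1"
    and t: "t \<le> length a" "t \<le> length b"
  shows "real (wdist (pres_eq R) (take t a) (take t b)) \<le> 2*\<delta> + 4"
proof -
  let ?E = "pres_eq R"
  let ?d = "wdist ?E"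
  define p where "p = (\<lambda>k. take k a)"
  define q where "q = (\<lambda>k::nat. if k = 0 then a else b)"
  define s where "s = (\<lambda>k. take (length b - k) b)"
  have da: "?d [] a = length a" using geo_self[OF ga] .
  have db: "?d [] b = length b" using geo_self[OF gb] .
  have dba: "?d b [] = length b" using db wdist_sym by metis
  have gp: "geod ?E [] a p" unfolding geod_def p_def da
  proof (intro conjI allI impI)
    fix k assume "k < length a"
    then show "?d (take k a) (take (Suc k) a) \<le> 1"
      using wdist_take[of k "Suc k" R a] by simp
  qed (auto intro: pres_eq.pe_refl)
  have gq: "geod ?E a b q" unfolding geod_def q_def
    using ab wdist_zero[of R a b] by (auto intro: pres_eq.pe_refl)
  have gs: "geod ?E b [] s" unfolding geod_def s_def dba
  proof (intro conjI allI impI)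
    fix k assume "k < length b"
    then show "?d (take (length b - k) b) (take (length b - Suc k) b) \<le> 1"
      using wdist_take'[of "length b - Suc k" "length b - k" R b] by simp
  qed (auto intro: pres_eq.pe_refl)
  have "side_close ?E \<delta> [] a b p q s"
    using hc gp gq gs unfolding hyp_const_def by blast
  then obtain j where j: "(j \<le> ?d a b \<and> real (?d (p t) (q j)) \<le> \<delta>) \<or>
        (j \<le> ?d b [] \<and> real (?d (p t) (s j)) \<le> \<delta>)"
    unfolding side_close_def using t da by auto
  define P where "P = take t a"
  define T where "T = take t b"
  have dP: "?d [] P = t" unfolding P_def using geo_prefix[OF ga t(1)] .
  have lb: "length b \<le> length a + 1" using wt[of R "[]" b a] da db ab by simp
  have dbT: "?d b T \<le> length b - t" unfolding T_def
    using wdist_take'[of t "length b" R b] t by simp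
  from j show ?thesis
  proof
    assume c1: "j \<le> ?d a b \<and> real (?d (p t) (q j)) \<le> \<delta>"
    have qa: "?d (q j) a \<le> 1"
      unfolding q_def using ab wdist_sym[of R a b] wdist_zero[of R a a]
      by (auto intro: pres_eq.pe_refl)
    have "?d P a \<le> ?d P (q j) + ?d (q j) a" by (rule wdist_tri)
    then have h1: "real (?d P a) \<le> \<delta> + 1" using c1 qa unfolding P_def p_def by linarith
    have h2: "length a \<le> t + ?d P a" using wt[of R "[]" a P] da dP by simp
    have h3: "?d P T \<le> ?d P a + ?d a b + ?d b T"
      using wt[of R P T a] wt[of R a T b] by simp
    have "?d P T \<le> 2 * ?d P a + 2" using h2 h3 ab dbT lb t by linarith
    then have "real (?d P T) \<le> 2 * real (?d P a) + 2" by linarith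
    then show ?thesis using h1 unfolding P_def T_def by linarith
  next
    assume c2: "j \<le> ?d b [] \<and> real (?d (p t) (s j)) \<le> \<delta>"
    define s' where "s' = length b - j"
    define Q where "Q = take s' b"
    have dPQ: "real (?d P Q) \<le> \<delta>" using c2 unfolding P_def Q_def s'_def p_def s_def by simp
    have dQ: "?d [] Q = s'" unfolding Q_def s'_def using geo_prefix[OF gb] by simp
    have e1: "t \<le> s' + ?d P Q" using wt[of R "[]" P Q] dP dQ wdist_sym[of R P Q] by simp
    have e2: "s' \<le> t + ?d P Q" using wt[of R "[]" Q P] dP dQ by simp
    have e3: "?d Q T \<le> (if s' \<le> t then t - s' else s' - t)"
      unfolding Q_def T_def using wdist_take[of s' t R b] wdist_take'[of t s' R b] by auto
    have "?d P T \<le> ?d P Q + ?d Q T" by (rule wdist_tri)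
    then have "?d P T \<le> 2 * ?d P Q" using e1 e2 e3 by (auto split: if_splits)
    then have "real (?d P T) \<le> 2 * real (?d P Q)" by linarith
    then show ?thesis using dPQ hc unfolding P_def T_def hyp_const_def by linarith
  qed
qed



definition shortrel :: "'x word set \<Rightarrow> real \<Rightarrow> 'x word set" where
  "shortrel R \<delta> = {s. real (length s) \<le> 4*\<delta> + 10 \<and> pres_eq R s []}"

lemma short_eq:
  assumes "pres_eq R u v" "real (length u + length v) \<le> 4*\<delta> + 10"
  shows "pres_eq (shortrel R \<delta>) u v"
proof -
  have "u @ winv v \<in> shortrel R \<delta>" unfolding shortrel_def
    using assms(2) pe_to_triv[OF assms(1)] by simp
  then have "pres_eq (shortrel R \<delta>) ([] @ (u @ winv v) @ []) ([] @ [])"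
    by (rule pres_eq.pe_rel)
  then have "pres_eq (shortrel R \<delta>) (u @ winv v) []" by simp
  then show ?thesis by (rule pe_from_triv)
qed

lemma ladder:
  assumes hc: "hyp_const (pres_eq R) \<delta>"
    and ga: "geo R x a" and gb: "geo R y b"
    and xy: "pres_eq R (x @ [c]) y"
  shows "pres_eq (shortrel R \<delta>) (a @ [c]) b"
proof -
  let ?E = "pres_eq R"
  let ?d = "wdist ?E"
  let ?S = "shortrel R \<delta>"
  have dpos: "\<delta> > 0" using hc unfolding hyp_const_def by simp
  have ac: "?E (a @ [c]) b"
  proof -
    have "?E (a @ [c]) (x @ [c])" using ga unfolding geo_def by (blast intro: pe_appR)
    moreover have "?E (x @ [c]) y" by (rule xy)
    moreover have "?E y b" using gb unfolding geo_def by (blast intro: pe_sym')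
    ultimately show ?thesis by (blast intro: pe_trans')
  qed
  have ab: "?d a b \<le> 1" using wdist_le[OF ac] by simp
  have da: "?d [] a = length a" using geo_self[OF ga] .
  have db: "?d [] b = length b" using geo_self[OF gb] .
  have lb: "length b \<le> length a + 1" using wt[of R "[]" b a] da db ab by simp
  have la: "length a \<le> length b + 1" using wt[of R "[]" a b] da db ab wdist_sym[of R a b]
    by simp
  define m where "m = min (length a) (length b)"
  have lad: "\<forall>t. t \<le> m \<longrightarrow> (\<exists>\<rho>. real (length \<rho>) \<le> 2*\<delta> + 4 \<and> ?E (take t a @ \<rho>) (take t b)
               \<and> pres_eq ?S (take t a @ \<rho>) (take t b))"
  proof (intro allI)
    fix t show "t \<le> m \<longrightarrow> (\<exists>\<rho>. real (length \<rho>) \<le> 2*\<delta> + 4 \<and> ?E (take t a @ \<rho>) (take t b)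
               \<and> pres_eq ?S (take t a @ \<rho>) (take t b))"
    proof (induction t)
      case 0 then show ?case using dpos by (auto intro!: exI[of _ "[]"] pres_eq.pe_refl)
    next
      case (Suc t)
      show ?case
      proof
        assume tm: "Suc t \<le> m"
        then obtain \<rho> where r: "real (length \<rho>) \<le> 2*\<delta> + 4" "?E (take t a @ \<rho>) (take t b)"
          "pres_eq ?S (take t a @ \<rho>) (take t b)" using Suc.IH by auto
        obtain \<rho>' where r': "length \<rho>' = ?d (take (Suc t) a) (take (Suc t) b)"
          "?E (take (Suc t) a @ \<rho>') (take (Suc t) b)" using wdist_ex by blast
        have r'l: "real (length \<rho>') \<le> 2*\<delta> + 4" unfolding r'(1)
          using fellow[OF hc ga gb ab] tm unfolding m_def by simp
        have ta: "take (Suc t) a = take t a @ [a ! t]" using tm unfolding m_def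
          by (simp add: take_Suc_conv_app_nth)
        have tb: "take (Suc t) b = take t b @ [b ! t]" using tm unfolding m_def
          by (simp add: take_Suc_conv_app_nth)
        have "?E (take t a @ (\<rho> @ [b ! t])) (take t a @ ([a ! t] @ \<rho>'))"
        proof -
          have "?E ((take t a @ \<rho>) @ [b ! t]) (take (Suc t) b)" using pe_appR[OF r(2)] tb by simp
          moreover have "?E (take t a @ ([a ! t] @ \<rho>')) (take (Suc t) b)" using r'(2) ta by simp
          ultimately show ?thesis using pe_trans'[OF _ pe_sym'] by simp
        qed
        then have "?E (\<rho> @ [b ! t]) ([a ! t] @ \<rho>')" by (rule pe_cancel_left)
        then have s1: "pres_eq ?S (\<rho> @ [b ! t]) ([a ! t] @ \<rho>')"
          using r(1) r'l by (rule_tac short_eq) auto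
        have "pres_eq ?S (take t a @ [a ! t] @ \<rho>') (take t a @ \<rho> @ [b ! t])"
          using pe_appL[OF pe_sym'[OF s1]] by simp
        moreover have "pres_eq ?S ((take t a @ \<rho>) @ [b ! t]) (take t b @ [b ! t])"
          by (rule pe_appR[OF r(3)])
        ultimately have "pres_eq ?S (take (Suc t) a @ \<rho>') (take (Suc t) b)"
          using ta tb pe_trans' by simp
        then show "\<exists>\<rho>. real (length \<rho>) \<le> 2*\<delta> + 4 \<and> ?E (take (Suc t) a @ \<rho>) (take (Suc t) b)
               \<and> pres_eq ?S (take (Suc t) a @ \<rho>) (take (Suc t) b)"
          using r'l r'(2) by blast
      qed
    qed
  qed
  then obtain \<rho> where r: "real (length \<rho>) \<le> 2*\<delta> + 4" "?E (take m a @ \<rho>) (take m b)"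
          "pres_eq ?S (take m a @ \<rho>) (take m b)" by blast
  have "?E (take m a @ (drop m a @ [c])) (take m a @ (\<rho> @ drop m b))"
  proof -
    have "take m a @ (drop m a @ [c]) = a @ [c]" by (metis append.assoc append_take_drop_id)
    then have "?E (take m a @ (drop m a @ [c])) b" using ac by metis
    moreover have "?E ((take m a @ \<rho>) @ drop m b) (take m b @ drop m b)" by (rule pe_appR[OF r(2)])
    ultimately show ?thesis using pe_trans'[OF _ pe_sym'] by simp
  qed
  then have "?E (drop m a @ [c]) (\<rho> @ drop m b)" by (rule pe_cancel_left)
  then have s1: "pres_eq ?S (drop m a @ [c]) (\<rho> @ drop m b)"
    using r(1) la lb dpos unfolding m_def by (rule_tac short_eq) auto
  have "pres_eq ?S (take m a @ (drop m a @ [c])) (take m a @ (\<rho> @ drop m b))"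
    by (rule pe_appL[OF s1])
  moreover have "pres_eq ?S ((take m a @ \<rho>) @ drop m b) (take m b @ drop m b)"
    by (rule pe_appR[OF r(3)])
  ultimately have "pres_eq ?S (take m a @ (drop m a @ [c])) b" using pe_trans' by simp
  moreover have "take m a @ (drop m a @ [c]) = a @ [c]" by (metis append.assoc append_take_drop_id)
  ultimately show ?thesis by simp
qed

lemma dehn_triv:
  assumes hc: "hyp_const (pres_eq R) \<delta>" and w: "pres_eq R w []"
  shows "pres_eq (shortrel R \<delta>) w []"
proof -
  let ?S = "shortrel R \<delta>"
  define g where "g = (\<lambda>v. SOME a. geo R v a)"
  have gg: "geo R v (g v)" for v unfolding g_def using geo_ex by (rule someI_ex)
  have "k \<le> length w \<Longrightarrow> pres_eq ?S (take k w) (g (take k w))" for k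
  proof (induction k)
    case 0
    have "length (g []) = 0" using gg[of "[]"] wdist_zero[of R "[]" "[]"]
      unfolding geo_def by (auto intro: pres_eq.pe_refl)
    then show ?case by (simp add: pres_eq.pe_refl)
  next
    case (Suc k)
    have tk: "take (Suc k) w = take k w @ [w ! k]" using Suc.prems by (simp add: take_Suc_conv_app_nth)
    have l: "pres_eq ?S (g (take k w) @ [w ! k]) (g (take (Suc k) w))"
      by (rule ladder[OF hc gg gg]) (simp add: tk pres_eq.pe_refl)
    have "pres_eq ?S (take k w @ [w ! k]) (g (take k w) @ [w ! k])"
      using Suc by (intro pe_appR) simp
    then show ?case using l tk by (metis pe_trans')
  qed
  from this[of "length w"] have 1: "pres_eq ?S w (g w)" by simp
  have "length (g w) = 0" using gg[of w] wdist_resp2[OF w, of "[]"] wdist_zero[of R "[]" "[]"]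
    unfolding geo_def by (auto intro: pres_eq.pe_refl)
  then show ?thesis using 1 by simp
qed

lemma dehn:
  assumes hc: "hyp_const (pres_eq R) \<delta>" and w: "pres_eq R u v"
  shows "pres_eq (shortrel R \<delta>) u v"
  using dehn_triv[OF hc pe_to_triv[OF w]] by (rule pe_from_triv)


definition qual :: "'x word set \<Rightarrow> 'x word set \<Rightarrow> nat \<Rightarrow> bool" where
  "qual R R' r \<longleftrightarrow> (\<forall>w. wdist (pres_eq R) [] w \<le> r \<and> \<not> pres_eq R w [] \<longrightarrow> \<not> pres_eq R' w [])"

lemma radius_eq: "radius (pres_eq R) (pres_eq R') = Sup {enat r | r. qual R R' r}"
  unfolding radius_def qual_def by simp

lemma qual_mono: "qual R R' r \<Longrightarrow> K \<le> r \<Longrightarrow> qual R R' K"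
  unfolding qual_def by (meson order_trans)

lemma qual_radius: "qual R R' K \<Longrightarrow> enat K \<le> radius (pres_eq R) (pres_eq R')"
  unfolding radius_eq by (rule Sup_upper) blast

lemma bad_finite:
  fixes R :: "nat \<Rightarrow> ('x::finite) word set"
  assumes mono: "\<And>i j u v. i \<le> j \<Longrightarrow> pres_eq (R i) u v \<Longrightarrow> pres_eq (R j) u v"
  shows "finite {i. \<not> qual (R i) (R (Suc i)) K}"
proof -
  define W where "W = {w :: 'x word. length w \<le> K}"
  have fW: "finite W" unfolding W_def
    using finite_lists_length_le[of "UNIV :: ('x \<times> bool) set" K] by simp
  define B where "B = (\<lambda>w. {i. \<not> pres_eq (R i) w [] \<and> pres_eq (R (Suc i)) w []})"
  have fB: "finite (B w)" for w
  proof (cases "B w = {}")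
    case False
    then obtain i where i: "i \<in> B w" by blast
    have "B w \<subseteq> {i}"
    proof
      fix j assume j: "j \<in> B w"
      show "j \<in> {i}"
      proof (rule ccontr)
        assume "j \<notin> {i}"
        then have "Suc i \<le> j \<or> Suc j \<le> i" by auto
        then show False
        proof
          assume "Suc i \<le> j"
          then show False using i j mono[of "Suc i" j w "[]"] unfolding B_def by blast
        next
          assume "Suc j \<le> i"
          then show False using i j mono[of "Suc j" i w "[]"] unfolding B_def by blast
        qed
      qed
    qed
    then show ?thesis using finite_subset by blast
  qed simp
  have "{i. \<not> qual (R i) (R (Suc i)) K} \<subseteq> (\<Union>w\<in>W. B w)"
  proof
    fix i assume "i \<in> {i. \<not> qual (R i) (R (Suc i)) K}"
    then obtain w where w: "wdist (pres_eq (R i)) [] w \<le> K" "\<not> pres_eq (R i) w []"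
      "pres_eq (R (Suc i)) w []"
      unfolding qual_def by blast
    obtain w' where w': "length w' = wdist (pres_eq (R i)) [] w" "pres_eq (R i) w' w"
      using wdist_ex[of "R i" "[]" w] by auto
    have "\<not> pres_eq (R i) w' []" using w'(2) w(2) pe_trans' pe_sym' by metis
    moreover have "pres_eq (R (Suc i)) w' []"
      using mono[of i "Suc i", OF _ w'(2)] w(3) pe_trans' by auto
    ultimately have "w' \<in> W" "i \<in> B w'" using w(1) w'(1) unfolding W_def B_def by auto
    then show "i \<in> (\<Union>w\<in>W. B w)" by blast
  qed
  then show ?thesis using fW fB by (meson finite_UN_I finite_subset)
qed

theorem proposition4p1:
  fixes R :: "nat \<Rightarrow> ('x::finite) word set"
    and \<delta> :: "nat \<Rightarrow> real"
  assumes fin: "\<And>i. finite (R i)"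
    and hom: "\<And>i r. r \<in> R i \<Longrightarrow> pres_eq (R (Suc i)) r []"
    and hyp: "\<And>i. hyp_const (pres_eq (R i)) (\<delta> i)"
    and lac: "lacunary_hyperbolic (\<lambda>u v. \<exists>i. pres_eq (R i) u v)"
  shows "(fin_presented (\<lambda>u v. \<exists>i. pres_eq (R i) u v) \<and>
          hyperbolic (\<lambda>u v. \<exists>i. pres_eq (R i) u v))
       \<or> (limsup (\<lambda>i. radius (pres_eq (R i)) (pres_eq (R (Suc i)))) = \<infinity> \<and>
          limsup (\<lambda>i. ereal (\<delta> i)) = \<infinity>)"
proof -
  have mono1: "pres_eq (R i) u v \<Longrightarrow> pres_eq (R (Suc i)) u v" for i u v
    by (erule pe_mono_rel) (rule hom)
  have mono: "i \<le> j \<Longrightarrow> pres_eq (R i) u v \<Longrightarrow> pres_eq (R j) u v" for i j u v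
  proof (induction j rule: dec_induct)
    case base then show ?case .
  next
    case (step n) then show ?case using mono1 by blast
  qed
  have evq: "eventually (\<lambda>i. qual (R i) (R (Suc i)) K) sequentially" for K
    using bad_finite[of R K, OF mono]
    unfolding cofinite_eq_sequentially[symmetric] eventually_cofinite by simp
  have radinf: "limsup (\<lambda>i. radius (pres_eq (R i)) (pres_eq (R (Suc i)))) = \<infinity>"
  proof -
    have *: "enat K \<le> limsup (\<lambda>i. radius (pres_eq (R i)) (pres_eq (R (Suc i))))" for K
    proof (rule le_Limsup)
      show "eventually (\<lambda>i. enat K \<le> radius (pres_eq (R i)) (pres_eq (R (Suc i)))) sequentially"
        using evq[of K] by (rule eventually_mono) (rule qual_radius)
    qed simp
    show ?thesis
    proof (rule ccontr)
      assume "limsup (\<lambda>i. radius (pres_eq (R i)) (pres_eq (R (Suc i)))) \<noteq> \<infinity>"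
      then obtain n where "limsup (\<lambda>i. radius (pres_eq (R i)) (pres_eq (R (Suc i)))) = enat n"
        by auto
      with *[of "Suc n"] show False by simp
    qed
  qed
  show ?thesis
  proof (cases "limsup (\<lambda>i. ereal (\<delta> i)) = \<infinity>")
    case True then show ?thesis using radinf by simp
  next
    case False
    then obtain n :: nat where B: "limsup (\<lambda>i. ereal (\<delta> i)) < ereal (real n)"
      using less_PInf_Ex_of_nat by blast
    define B where "B = real n"
    have evd: "eventually (\<lambda>i. ereal (\<delta> i) < ereal B) sequentially"
      using Limsup_lessD[OF B] unfolding B_def .
    define K where "K = nat \<lceil>4*B + 10\<rceil>"
    obtain N1 where N1: "\<And>i. i \<ge> N1 \<Longrightarrow> qual (R i) (R (Suc i)) K"
      using evq[of K] unfolding eventually_sequentially by blast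
    obtain N2 where N2: "\<And>i. i \<ge> N2 \<Longrightarrow> \<delta> i < B"
      using evd unfolding eventually_sequentially by auto
    define N where "N = max N1 N2"
    have step: "pres_eq (R i) u v" if iN: "i \<ge> N" and h: "pres_eq (R (Suc i)) u v" for i u v
    proof -
      have S: "pres_eq (shortrel (R (Suc i)) (\<delta> (Suc i))) u v" by (rule dehn[OF hyp h])
      show ?thesis
      proof (rule pe_mono_rel[OF S])
        fix s assume s: "s \<in> shortrel (R (Suc i)) (\<delta> (Suc i))"
        have q: "qual (R i) (R (Suc i)) K" using N1 iN unfolding N_def by simp
        have dl: "\<delta> (Suc i) < B" using N2 iN unfolding N_def by simp
        have sl: "real (length s) \<le> 4 * \<delta> (Suc i) + 10" and st: "pres_eq (R (Suc i)) s []"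
          using s unfolding shortrel_def by auto
        have "real (length s) \<le> 4*B + 10" using sl dl by linarith
        then have "\<lceil>real (length s)\<rceil> \<le> \<lceil>4*B + 10\<rceil>" by (rule ceiling_mono)
        then have "int (length s) \<le> \<lceil>4*B + 10\<rceil>" by simp
        then have "length s \<le> K" unfolding K_def by (simp only: le_nat_iff)
        then have "wdist (pres_eq (R i)) [] s \<le> K"
          using wdist_le[of "R i" "[]" s s] pres_eq.pe_refl by fastforce
        then show "pres_eq (R i) s []" using q st unfolding qual_def by blast
      qed
    qed
    have stepk: "pres_eq (R (N + k)) u v \<Longrightarrow> pres_eq (R N) u v" for k u v
    proof (induction k)
      case 0 then show ?case by simp
    next
      case (Suc k)
      have "pres_eq (R (N + k)) u v" using step[of "N + k"] Suc.prems by simp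
      then show ?case by (rule Suc.IH)
    qed
    have bk: "pres_eq (R j) u v \<Longrightarrow> pres_eq (R N) u v" for j u v
    proof (cases "j \<le> N")
      case True then show "pres_eq (R j) u v \<Longrightarrow> pres_eq (R N) u v" using mono by blast
    next
      case False
      then have "j = N + (j - N)" by simp
      then show "pres_eq (R j) u v \<Longrightarrow> pres_eq (R N) u v" using stepk by metis
    qed
    have eqE: "(\<lambda>u v. \<exists>i. pres_eq (R i) u v) = pres_eq (R N)" using bk by blast
    show ?thesis unfolding eqE fin_presented_def hyperbolic_def using fin hyp by blast
  qed
qed

end
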